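(* The category $\mathsf{BA}^\mathsf{S}$ is dually isomorphic to the category $\mathsf{BA}^\mathsf{Q}$. Explicitly, the assignments (identity on objects) sending a subordination $S\colon A\to B$ to the quasi-semi-homomorphism $\Delta_S\colon B\to\mathcal J(A)$, $\Delta_S(b)=S^{-1}[b]=\{a\in A\mid a\mathrel{S}b\}$, and sending a quasi-semi-homomorphism $\Delta\colon A\to\mathcal J(B)$ to the subordination $S_\Delta\colon B\to A$, $b\mathrel{S_\Delta}a \iff b\in\Delta(a)$, are well-defined contravariant functors that are mutually inverse.
   Context: For a boolean algebra $B$, $\mathcal J(B)$ denotes the set of ideals of $B$. A quasi-semi-homomorphism from a boolean algebra $A$ to a boolean algebra $B$ is a function $\Delta\colon A\to\mathcal J(B)$ with $\Delta(1)=B$ and $\Delta(a\wedge b)=\Delta(a)\cap\Delta(b)$ for all $a,b\in A$. $\mathsf{BA}^\mathsf{Q}$ is the category of boolean algebras and quasi-semi-homomorphisms, where the identity on $A$ is $a\mapsto{\downarrow}a$ and the composite of $\Delta_1\colon A\to\mathcal J(B)$ and $\Delta_2\colon B\to\mathcal J(C)$ is $(\Delta_2\circ\Delta_1)(a)=\bigcup\{\Delta_2(b)\mid b\in\Delta_1(a)\}$. A subordination relation from a boolean algebra $A$ to a boolean algebra $B$ is a relation $S\subseteq A\times B$ (written $a\mathrel{S}c$) such that for $a,b\in A$, $c,d\in B$: (S1) $0\mathrel{S}0$ and $1\mathrel{S}1$; (S2) $a\mathrel{S}c$ and $b\mathrel{S}c$ imply $(a\vee b)\mathrel{S}c$; (S3)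 $a\mathrel{S}c$ and $a\mathrel{S}d$ imply $a\mathrel{S}(c\wedge d)$; (S4) $a\le b$, $b\mathrel{S}c$, $c\le d$ imply $a\mathrel{S}d$. $\mathsf{BA}^\mathsf{S}$ is the category of boolean algebras and subordination relations; the identity on $A$ is the order $\le_A$ and composition is relational composition: for $S_1\colon A\to B$, $S_2\colon B\to C$, $a\mathrel{(S_2\circ S_1)}c$ iff there is $b\in B$ with $a\mathrel{S_1}b$ and $b\mathrel{S_2}c$. *)

theory Defs
  imports Main
begin

definition is_ideal :: "'a::boolean_algebra set \<Rightarrow> bool" where
  "is_ideal I \<longleftrightarrow> bot \<in> I \<and> (\<forall>a b. a \<in> I \<longrightarrow> b \<in> I \<longrightarrow> sup a b \<in> I)
      \<and> (\<forall>a b. a \<le> b \<longrightarrow> b \<in> I \<longrightarrow> a \<in> I)"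

definition qsh :: "('a::boolean_algebra \<Rightarrow> 'b::boolean_algebra set) \<Rightarrow> bool" where
  "qsh D \<longleftrightarrow> (\<forall>a. is_ideal (D a)) \<and> D top = UNIV \<and> (\<forall>a b. D (inf a b) = D a \<inter> D b)"

definition qid :: "'a::boolean_algebra \<Rightarrow> 'a set" where
  "qid a = {x. x \<le> a}"

definition qcomp :: "('b::boolean_algebra \<Rightarrow> 'c::boolean_algebra set) \<Rightarrow> ('a::boolean_algebra \<Rightarrow> 'b set) \<Rightarrow> 'a \<Rightarrow> 'c set" where
  "qcomp D2 D1 a = \<Union>{D2 b | b. b \<in> D1 a}"

definition subord :: "('a::boolean_algebra \<Rightarrow> 'b::boolean_algebra \<Rightarrow> bool) \<Rightarrow> bool" where
  "subord S \<longleftrightarrow> S bot bot \<and> S top top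
     \<and> (\<forall>a b c. S a c \<longrightarrow> S b c \<longrightarrow> S (sup a b) c)
     \<and> (\<forall>a c d. S a c \<longrightarrow> S a d \<longrightarrow> S a (inf c d))
     \<and> (\<forall>a b c d. a \<le> b \<longrightarrow> S b c \<longrightarrow> c \<le> d \<longrightarrow> S a d)"

definition sid :: "'a::boolean_algebra \<Rightarrow> 'a \<Rightarrow> bool" where
  "sid a b \<longleftrightarrow> a \<le> b"

definition scomp :: "('b::boolean_algebra \<Rightarrow> 'c::boolean_algebra \<Rightarrow> bool) \<Rightarrow> ('a::boolean_algebra \<Rightarrow> 'b \<Rightarrow> bool) \<Rightarrow> 'a \<Rightarrow> 'c \<Rightarrow> bool" where
  "scomp S2 S1 a c \<longleftrightarrow> (\<exists>b. S1 a b \<and> S2 b c)"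

definition delta_of :: "('a::boolean_algebra \<Rightarrow> 'b::boolean_algebra \<Rightarrow> bool) \<Rightarrow> 'b \<Rightarrow> 'a set" where
  "delta_of S b = {a. S a b}"

definition sub_of :: "('a::boolean_algebra \<Rightarrow> 'b::boolean_algebra set) \<Rightarrow> 'b \<Rightarrow> 'a \<Rightarrow> bool" where
  "sub_of D b a \<longleftrightarrow> b \<in> D a"

end

theory Submission
  imports Defs
begin

theorem theorem2p5:
  shows
  "(\<forall>S :: 'a::boolean_algebra \<Rightarrow> 'b::boolean_algebra \<Rightarrow> bool. subord S \<longrightarrow> qsh (delta_of S))
 \<and> (\<forall>D :: 'a::boolean_algebra \<Rightarrow> 'b::boolean_algebra set. qsh D \<longrightarrow> subord (sub_of D))
 \<and> delta_of (sid :: 'a \<Rightarrow> 'a \<Rightarrow> bool) = qid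
 \<and> sub_of (qid :: 'a \<Rightarrow> 'a set) = sid
 \<and> (\<forall>(S1 :: 'a \<Rightarrow> 'b \<Rightarrow> bool) (S2 :: 'b \<Rightarrow> 'c::boolean_algebra \<Rightarrow> bool).
      subord S1 \<longrightarrow> subord S2 \<longrightarrow> delta_of (scomp S2 S1) = qcomp (delta_of S1) (delta_of S2))
 \<and> (\<forall>(D1 :: 'a \<Rightarrow> 'b set) (D2 :: 'b \<Rightarrow> 'c set).
      qsh D1 \<longrightarrow> qsh D2 \<longrightarrow> sub_of (qcomp D2 D1) = scomp (sub_of D1) (sub_of D2))
 \<and> (\<forall>S :: 'a \<Rightarrow> 'b \<Rightarrow> bool. subord S \<longrightarrow> sub_of (delta_of S) = S)
 \<and> (\<forall>D :: 'a \<Rightarrow> 'b set. qsh D \<longrightarrow> delta_of (sub_of D) = D)"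
  apply (intro conjI allI impI)
  subgoal for S
  proof -
    assume h: "subord S"
    have b: "S bot bot" and t: "S top top"
      and j: "\<And>a b c. S a c \<Longrightarrow> S b c \<Longrightarrow> S (sup a b) c"
      and m: "\<And>a c d. S a c \<Longrightarrow> S a d \<Longrightarrow> S a (inf c d)"
      and w: "\<And>a b c d. a \<le> b \<Longrightarrow> S b c \<Longrightarrow> c \<le> d \<Longrightarrow> S a d"
      using h unfolding subord_def by blast+
    have i: "is_ideal (delta_of S c)" for c
      unfolding is_ideal_def delta_of_def
    proof (intro conjI allI impI)
      show "bot \<in> {a. S a c}" using w[OF order_refl b bot_least] by simp
      fix x y show "x \<in> {a. S a c} \<Longrightarrow> y \<in> {a. S a c} \<Longrightarrow> sup x y \<in> {a. S a c}" using j by simp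
    next
      fix x y assume "x \<le> y" "y \<in> {a. S a c}"
      then show "x \<in> {a. S a c}" using w[of x y c c] by simp
    qed
    have u: "delta_of S top = UNIV"
      unfolding delta_of_def using w[OF top_greatest t order_refl] by auto
    have n: "delta_of S (inf c d) = delta_of S c \<inter> delta_of S d" for c d
    proof (rule set_eqI)
      fix x show "x \<in> delta_of S (inf c d) \<longleftrightarrow> x \<in> delta_of S c \<inter> delta_of S d"
        unfolding delta_of_def using m[of x c d] w[of x x "inf c d" c] w[of x x "inf c d" d] by auto
    qed
    show ?thesis unfolding qsh_def using i u n by blast
  qed
  subgoal for D
    unfolding qsh_def is_ideal_def sub_of_def subord_def
    apply (intro conjI allI impI)
    apply blast apply blast apply blast apply blast
    apply (metis Int_iff inf.absorb_iff1)
    done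
  subgoal by (auto simp: delta_of_def sid_def qid_def fun_eq_iff)
  subgoal by (auto simp: sub_of_def sid_def qid_def fun_eq_iff)
  subgoal by (auto simp: delta_of_def scomp_def qcomp_def fun_eq_iff)
  subgoal by (auto simp: sub_of_def scomp_def qcomp_def fun_eq_iff)
  subgoal by (auto simp: sub_of_def delta_of_def fun_eq_iff)
  subgoal by (auto simp: sub_of_def delta_of_def fun_eq_iff)
  done

end
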